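(* For $\theta_0\in[0,\bar\theta)$ and $s\in\mathcal S(\theta_0)$ let $$W(\theta_0,s)=\int_{\theta_0}^{\bar\theta}\frac{1-F(\theta)}{f(\theta)}\big(s(\theta)+v'(\theta)\big)dF(\theta)+v(0)\,\mathbf 1[\theta_0=0]$$ (consumer surplus under the constraint that prices are nonnegative). Then: (i) if $F$ satisfies IFR, $W$ is maximized over all $\theta_0\in[0,\bar\theta)$, $s\in\mathcal S(\theta_0)$ by $\theta_0=0$ and $s\equiv\tfrac12$ (total pooling without exclusion, implemented with prices $p\equiv0$); (ii) if $F$ satisfies DFR, $W$ is maximized by $\theta_0=0$ and $s=F$ (full separation without exclusion, implemented with prices $p(\theta)=\int_0^\theta x\,dF(x)$).
   Context: Let $\bar\theta\in(0,\infty]$, $\Theta=[0,\bar\theta)$ (closed at $\bar\theta$ if finite), $F$ a cdf on $\Theta$ with continuous, strictly positive density $f$, $dF=f\,d\theta$, and finite mean. The intrinsic value $v:\Theta\to[0,\infty)$ is twice continuously differentiable with $v'\ge0$, $v''\le0$, and $\int\frac{1-F}{f}v'\,dF<\infty$. IFR means $\frac{1-F}{f}$ is nonincreasing on $\Theta$; DFR means it is nondecreasing. For $\theta_0\in[0,\bar\theta)$ and bounded measurable $a,b$ on $[\theta_0,\bar\theta)$, write $b\in\mathrm{MPS}(a)$ if $\int_x^{\bar\theta}b\,dF\le\int_x^{\bar\theta}a\,dF$ for all $x\in[\theta_0,\bar\theta)$, with equality at $x=\theta_0$. $\mathcal S(\theta_0)$ is the set of nondecreasing $s:[\theta_0,\bar\theta)\to[0,1]$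 with $s\in\mathrm{MPS}(F)$ on $[\theta_0,\bar\theta)$. A buyer of type $\theta$ paying $p\ge0$ for status $\sigma$ gets $\theta\sigma-p+v(\theta)$; excluded buyers get $0$. *)

theory Defs
  imports "HOL-Analysis.Analysis"
begin

definition Theta :: "ereal \<Rightarrow> real set" where
  "Theta tb = {x. 0 \<le> x \<and> ereal x \<le> tb}"

definition Ico_tb :: "real \<Rightarrow> ereal \<Rightarrow> real set" where
  "Ico_tb a tb = {x. a \<le> x \<and> ereal x < tb}"

definition intdF :: "(real \<Rightarrow> real) \<Rightarrow> real set \<Rightarrow> (real \<Rightarrow> real) \<Rightarrow> real" where
  "intdF f A g = (LINT x:A|lborel. g x * f x)"

definition std_assms ::
  "ereal \<Rightarrow> (real \<Rightarrow> real) \<Rightarrow> (real \<Rightarrow> real) \<Rightarrow> (real \<Rightarrow> real) \<Rightarrow> (real \<Rightarrow> real) \<Rightarrow> (real \<Rightarrow> real) \<Rightarrow> bool"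
  where
  "std_assms tb F f v v1 v2 \<longleftrightarrow>
     0 < tb \<and>
     continuous_on (Theta tb) f \<and> (\<forall>x\<in>Theta tb. 0 < f x) \<and>
     set_integrable lborel (Theta tb) f \<and> (LINT x:Theta tb|lborel. f x) = 1 \<and>
     (\<forall>x\<in>Theta tb. F x = (LINT y:{0..x}|lborel. f y)) \<and>
     set_integrable lborel (Theta tb) (\<lambda>x. x * f x) \<and>
     (\<forall>x\<in>Theta tb. 0 \<le> v x) \<and>
     (\<forall>x\<in>Theta tb. (v has_real_derivative v1 x) (at x within Theta tb)) \<and>
     (\<forall>x\<in>Theta tb. (v1 has_real_derivative v2 x) (at x within Theta tb)) \<and>
     continuous_on (Theta tb) v2 \<and>
     (\<forall>x\<in>Theta tb. 0 \<le> v1 x) \<and> (\<forall>x\<in>Theta tb. v2 x \<le> 0) \<and>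
     set_integrable lborel (Theta tb) (\<lambda>x. (1 - F x) / f x * v1 x * f x)"

definition IFR :: "ereal \<Rightarrow> (real \<Rightarrow> real) \<Rightarrow> (real \<Rightarrow> real) \<Rightarrow> bool" where
  "IFR tb F f \<longleftrightarrow> antimono_on (Theta tb) (\<lambda>x. (1 - F x) / f x)"

definition DFR :: "ereal \<Rightarrow> (real \<Rightarrow> real) \<Rightarrow> (real \<Rightarrow> real) \<Rightarrow> bool" where
  "DFR tb F f \<longleftrightarrow> mono_on (Theta tb) (\<lambda>x. (1 - F x) / f x)"

definition MPS :: "ereal \<Rightarrow> (real \<Rightarrow> real) \<Rightarrow> real \<Rightarrow> (real \<Rightarrow> real) \<Rightarrow> (real \<Rightarrow> real) \<Rightarrow> bool" where
  "MPS tb f t0 b a \<longleftrightarrow>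
     bounded (a ` Ico_tb t0 tb) \<and> bounded (b ` Ico_tb t0 tb) \<and>
     set_borel_measurable lborel (Ico_tb t0 tb) a \<and>
     set_borel_measurable lborel (Ico_tb t0 tb) b \<and>
     (\<forall>x\<in>Ico_tb t0 tb. intdF f (Ico_tb x tb) b \<le> intdF f (Ico_tb x tb) a) \<and>
     intdF f (Ico_tb t0 tb) b = intdF f (Ico_tb t0 tb) a"

definition Sset :: "ereal \<Rightarrow> (real \<Rightarrow> real) \<Rightarrow> (real \<Rightarrow> real) \<Rightarrow> real \<Rightarrow> (real \<Rightarrow> real) set" where
  "Sset tb F f t0 = {s. mono_on (Ico_tb t0 tb) s \<and> (\<forall>x\<in>Ico_tb t0 tb. 0 \<le> s x \<and> s x \<le> 1)
                       \<and> MPS tb f t0 s F}"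

definition W :: "ereal \<Rightarrow> (real \<Rightarrow> real) \<Rightarrow> (real \<Rightarrow> real) \<Rightarrow> (real \<Rightarrow> real) \<Rightarrow> (real \<Rightarrow> real)
                  \<Rightarrow> real \<Rightarrow> (real \<Rightarrow> real) \<Rightarrow> real" where
  "W tb F f v v1 t0 s =
     intdF f (Ico_tb t0 tb) (\<lambda>x. (1 - F x) / f x * (s x + v1 x)) + (if t0 = 0 then v 0 else 0)"

end

theory Submission
  imports Defs
begin


lemma Theta_sets[measurable]: "Theta tb \<in> sets borel"
proof (cases tb)
  case (real r) then have "Theta tb = {0..r}" by (auto simp: Theta_def)
  then show ?thesis by simp
next
  case PInf then have "Theta tb = {0..}" by (auto simp: Theta_def)
  then show ?thesis by simp
next
  case MInf then have "Theta tb = {}" by (auto simp: Theta_def)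
  then show ?thesis by simp
qed

lemma Ico_sets[measurable]: "Ico_tb a tb \<in> sets borel"
proof (cases tb)
  case (real r) then have "Ico_tb a tb = {a..<r}" by (auto simp: Ico_tb_def)
  then show ?thesis by simp
next
  case PInf then have "Ico_tb a tb = {a..}" by (auto simp: Ico_tb_def)
  then show ?thesis by simp
next
  case MInf then have "Ico_tb a tb = {}" by (auto simp: Ico_tb_def)
  then show ?thesis by simp
qed

definition Up :: "ereal \<Rightarrow> real \<Rightarrow> real set" where
  "Up tb x = {y. x < y \<and> ereal y \<le> tb}"

lemma Up_sets[measurable]: "Up tb a \<in> sets borel"
proof (cases tb)
  case (real r) then have "Up tb a = {a<..r}" by (auto simp: Up_def)
  then show ?thesis by simp
next
  case PInf then have "Up tb a = {a<..}" by (auto simp: Up_def)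
  then show ?thesis by simp
next
  case MInf then have "Up tb a = {}" by (auto simp: Up_def)
  then show ?thesis by simp
qed

lemma lint_finite_diff:
  fixes h :: "real \<Rightarrow> real"
  assumes "finite X" "(A - B) \<union> (B - A) \<subseteq> X"
  shows "(LINT x:A|lborel. h x) = (LINT x:B|lborel. h x)"
  by (rule set_integral_discrete_difference[OF countable_finite[OF assms(1)] assms(2)]) auto

lemma sint_finite_diff:
  fixes h :: "real \<Rightarrow> real"
  assumes "finite X" "(A - B) \<union> (B - A) \<subseteq> X"
  shows "set_integrable lborel A h \<longleftrightarrow> set_integrable lborel B h"
  by (rule set_integrable_discrete_difference[OF countable_finite[OF assms(1)] assms(2)]) auto

lemma lint_nonneg:
  fixes h :: "real \<Rightarrow> real"
  assumes "\<And>x. x \<in> A \<Longrightarrow> 0 \<le> h x"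
  shows "0 \<le> (LINT x:A|lborel. h x)"
  unfolding set_lebesgue_integral_def
  by (rule Bochner_Integration.integral_nonneg) (use assms in \<open>auto simp: indicator_def\<close>)

lemma lint_mono_set:
  fixes h :: "real \<Rightarrow> real"
  assumes "set_integrable lborel B h" "A \<in> sets borel" "B \<in> sets borel" "A \<subseteq> B"
    "\<And>x. x \<in> B \<Longrightarrow> 0 \<le> h x"
  shows "(LINT x:A|lborel. h x) \<le> (LINT x:B|lborel. h x)"
proof -
  have B: "B = A \<union> (B - A)" using assms(4) by auto
  have "(LINT x:B|lborel. h x) = (LINT x:A|lborel. h x) + (LINT x:B-A|lborel. h x)"
    apply (subst B) apply (rule set_integral_Un)
    using assms by (auto intro: set_integrable_subset)
  moreover have "0 \<le> (LINT x:B-A|lborel. h x)" using assms by (intro lint_nonneg) auto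
  ultimately show ?thesis by simp
qed

lemma set_bm_mono:
  fixes g :: "real \<Rightarrow> real"
  assumes "mono_on A g \<or> antimono_on A g" "A \<in> sets borel"
  shows "set_borel_measurable lborel A g"
proof -
  have "mono_on A g \<or> mono_on A (\<lambda>x. - g x)" using assms(1)
    by (auto simp: monotone_on_def)
  then have "g \<in> borel_measurable (restrict_space borel A)"
  proof
    assume "mono_on A (\<lambda>x. - g x)"
    then have "(\<lambda>x. - g x) \<in> borel_measurable (restrict_space borel A)"
      by (rule borel_measurable_mono_on_fnc)
    then have "(\<lambda>x. - (- g x)) \<in> borel_measurable (restrict_space borel A)"
      by (rule borel_measurable_uminus)
    then show ?thesis by simp
  qed (rule borel_measurable_mono_on_fnc)
  then show ?thesis unfolding set_borel_measurable_def
    using borel_measurable_restrict_space_iff[of A borel g] assms(2) by simp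
qed




locale setting =
  fixes tb :: ereal and F f v v1 v2 :: "real \<Rightarrow> real"
  assumes std: "std_assms tb F f v v1 v2"
begin

abbreviation "T \<equiv> Theta tb"

lemma tb_pos: "0 < tb" and fcont: "continuous_on T f" and fpos: "\<And>x. x \<in> T \<Longrightarrow> 0 < f x"
  and fint: "set_integrable lborel T f" and fone: "(LINT x:T|lborel. f x) = 1"
  and Fdef: "\<And>x. x \<in> T \<Longrightarrow> F x = (LINT y:{0..x}|lborel. f y)"
  and xfint: "set_integrable lborel T (\<lambda>x. x * f x)"
  and vnn: "\<And>x. x \<in> T \<Longrightarrow> 0 \<le> v x"
  and v1nn: "\<And>x. x \<in> T \<Longrightarrow> 0 \<le> v1 x"
  and v1int: "set_integrable lborel T (\<lambda>x. (1 - F x) / f x * v1 x * f x)"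
  using std unfolding std_assms_def by auto

lemma zero_T: "0 \<in> T" using tb_pos unfolding Theta_def zero_ereal_def by (auto intro: less_imp_le)

lemma f_nn: "x \<in> T \<Longrightarrow> 0 \<le> f x" using fpos[of x] by linarith

lemma Ico_sub_T: "0 \<le> a \<Longrightarrow> Ico_tb a tb \<subseteq> T"
  by (auto simp: Ico_tb_def Theta_def)

lemma Icc_sub_T: "x \<in> T \<Longrightarrow> {0..x} \<subseteq> T"
  by (auto simp: Theta_def) (meson ereal_less_eq(3) order_trans)

lemma Up_sub_T: "x \<in> T \<Longrightarrow> Up tb x \<subseteq> T"
  by (auto simp: Theta_def Up_def)

lemma fint_sub: "A \<in> sets borel \<Longrightarrow> A \<subseteq> T \<Longrightarrow> set_integrable lborel A f"
  using fint by (rule set_integrable_subset) auto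

lemma F_tail: assumes "x \<in> T" shows "F x + (LINT y:Up tb x|lborel. f y) = 1"
proof -
  have eq: "T = {0..x} \<union> Up tb x" using assms Icc_sub_T[OF assms] Up_sub_T[OF assms]
    by (auto simp: Up_def Theta_def)
  have "(LINT y:T|lborel. f y) = (LINT y:{0..x}|lborel. f y) + (LINT y:Up tb x|lborel. f y)"
    unfolding eq apply (rule set_integral_Un)
    using assms Icc_sub_T[OF assms] Up_sub_T[OF assms]
    by (auto simp: Up_def intro!: fint_sub)
  then show ?thesis using fone Fdef[OF assms] by simp
qed

lemma tail_nn: "0 \<le> (LINT y:Up tb x|lborel. f y)" if "x \<in> T"
  using that Up_sub_T[OF that] fpos by (intro lint_nonneg) (auto intro: less_imp_le)

lemma F_nn: assumes "x \<in> T" shows "0 \<le> F x"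
proof -
  have "0 \<le> (LINT y:{0..x}|lborel. f y)" by (rule lint_nonneg) (use Icc_sub_T[OF assms] f_nn in blast)
  then show ?thesis using Fdef[OF assms] by simp
qed

lemma F_le1: "x \<in> T \<Longrightarrow> F x \<le> 1"
  using F_tail tail_nn by fastforce

lemma tail_Ico: assumes "x \<in> T" shows "(LINT y:Ico_tb x tb|lborel. f y) = 1 - F x"
proof -
  have "(LINT y:Ico_tb x tb|lborel. f y) = (LINT y:Up tb x|lborel. f y)"
    by (rule lint_finite_diff[where X="{x, real_of_ereal tb}"])
      (auto simp: Ico_tb_def Up_def, metis order.order_iff_strict real_of_ereal.simps(1))
  then show ?thesis using F_tail[OF assms] by simp
qed

lemma F_Ico0: assumes "x \<in> T" shows "(LINT y:{0..<x}|lborel. f y) = F x"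
proof -
  have "(LINT y:{0..<x}|lborel. f y) = (LINT y:{0..x}|lborel. f y)"
    by (rule lint_finite_diff[where X="{x}"]) auto
  then show ?thesis using Fdef[OF assms] by simp
qed

lemma F_mono: "mono_on T F"
proof (rule mono_onI)
  fix x y assume xy: "x \<in> T" "y \<in> T" "x \<le> y"
  have "Up tb y \<subseteq> Up tb x" using xy by (auto simp: Up_def)
  then have "(LINT z:Up tb y|lborel. f z) \<le> (LINT z:Up tb x|lborel. f z)"
    using xy Up_sub_T[OF xy(1)] f_nn by (intro lint_mono_set fint_sub) auto
  then show "F x \<le> F y" using F_tail[OF xy(1)] F_tail[OF xy(2)] by simp
qed

lemma F_meas: "A \<in> sets borel \<Longrightarrow> A \<subseteq> T \<Longrightarrow> set_borel_measurable lborel A F"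
  by (rule set_bm_mono) (auto intro: mono_on_subset[OF F_mono])

end



lemma sbm_iff: fixes g :: "real \<Rightarrow> real" shows "A \<in> sets borel \<Longrightarrow> set_borel_measurable lborel A g \<longleftrightarrow> g \<in> borel_measurable (restrict_space borel A)"
  unfolding set_borel_measurable_def using borel_measurable_restrict_space_iff[of A borel g] by simp

context setting begin

lemma fmeasT[measurable]: "(\<lambda>y. indicator T y * f y) \<in> borel_measurable borel"
  using fint unfolding set_integrable_def by (simp add: borel_measurable_integrable)

lemma oneF_int: "set_integrable lborel T (\<lambda>x. 1 - F x)"
proof -
  define G where "G x y = ennreal (indicator T x * (if x < y then 1 else 0) * (indicator T y * f y))" for x y
  have Gm: "case_prod G \<in> borel_measurable (lborel \<Otimes>\<^sub>M lborel)"
    unfolding G_def by measurable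
  have inner1: "(\<integral>\<^sup>+y. G x y \<partial>lborel) = ennreal (indicator T x * (1 - F x))" for x
  proof (cases "x \<in> T")
    case True
    have "(\<integral>\<^sup>+y. G x y \<partial>lborel) = (\<integral>\<^sup>+y. ennreal (indicator (Up tb x) y *\<^sub>R f y) \<partial>lborel)"
      using True Up_sub_T[OF True] by (intro nn_integral_cong) (auto simp: G_def Up_def Theta_def indicator_def)
    also have "\<dots> = ennreal (LINT y:Up tb x|lborel. f y)"
      unfolding set_lebesgue_integral_def
      apply (rule nn_integral_eq_integral)
      using fint_sub[of "Up tb x"] Up_sub_T[OF True] f_nn
      by (auto simp: set_integrable_def indicator_def)
    also have "(LINT y:Up tb x|lborel. f y) = 1 - F x" using F_tail[OF True] by linarith
    finally show ?thesis using True by simp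
  qed (simp add: G_def)
  have inner2: "(\<integral>\<^sup>+x. G x y \<partial>lborel) = ennreal (indicator T y * (y * f y))" for y
  proof (cases "y \<in> T")
    case True
    then have y0: "0 \<le> y" by (simp add: Theta_def)
    have "(\<integral>\<^sup>+x. G x y \<partial>lborel) = (\<integral>\<^sup>+x. ennreal (f y) * indicator {0..<y} x \<partial>lborel)"
      using True by (intro nn_integral_cong)
        (auto simp: G_def Theta_def indicator_def, meson ereal_less_eq(3) less_imp_le order_trans)
    also have "\<dots> = ennreal (f y) * ennreal y"
      using y0 by (subst nn_integral_cmult_indicator) auto
    finally show ?thesis using True y0 f_nn[OF True] by (simp add: ennreal_mult' mult.commute)
  qed (simp add: G_def)
  have "(\<integral>\<^sup>+x. ennreal (indicator T x * (1 - F x)) \<partial>lborel) = (\<integral>\<^sup>+x. \<integral>\<^sup>+y. G x y \<partial>lborel \<partial>lborel)"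
    by (simp add: inner1)
  also have "\<dots> = (\<integral>\<^sup>+y. \<integral>\<^sup>+x. G x y \<partial>lborel \<partial>lborel)"
    by (rule lborel_pair.Fubini'[OF Gm, symmetric])
  also have "\<dots> = (\<integral>\<^sup>+y. ennreal (indicator T y * (y * f y)) \<partial>lborel)"
    by (simp add: inner2)
  also have "\<dots> < \<infinity>"
  proof -
    have "(\<integral>\<^sup>+y. ennreal (indicator T y * (y * f y)) \<partial>lborel) = ennreal (LINT y:T|lborel. y * f y)"
      unfolding set_lebesgue_integral_def real_scaleR_def
      apply (rule nn_integral_eq_integral)
      using xfint f_nn by (auto simp: set_integrable_def indicator_def Theta_def)
    then show ?thesis by simp
  qed
  finally have fin: "(\<integral>\<^sup>+x. ennreal (indicator T x * (1 - F x)) \<partial>lborel) < \<infinity>" .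
  have meas: "set_borel_measurable lborel T (\<lambda>x. 1 - F x)"
    using F_meas[of T] by (simp add: sbm_iff)
  show ?thesis unfolding set_integrable_def
    apply (rule integrableI_nonneg)
    using meas fin F_le1 by (auto simp: set_borel_measurable_def indicator_def)
qed

end



context setting begin

lemma f_bm: "A \<in> sets borel \<Longrightarrow> A \<subseteq> T \<Longrightarrow> f \<in> borel_measurable (restrict_space borel A)"
  using fint_sub[of A] sbm_iff[of A f]
  by (simp add: set_integrable_def set_borel_measurable_def borel_measurable_integrable)

lemma F_bm: "A \<in> sets borel \<Longrightarrow> A \<subseteq> T \<Longrightarrow> F \<in> borel_measurable (restrict_space borel A)"
  using F_meas[of A] sbm_iff[of A F] by simp

lemma find_bm: "A \<in> sets borel \<Longrightarrow> A \<subseteq> T \<Longrightarrow> (\<lambda>y. indicator A y * f y) \<in> borel_measurable borel"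
  using fint_sub[of A] unfolding set_integrable_def by (simp add: borel_measurable_integrable)

lemma tail_nn_int: assumes "x \<in> T"
  shows "(\<integral>\<^sup>+y. ennreal (indicator (Up tb x) y * f y) \<partial>lborel) = ennreal (1 - F x)"
proof -
  have "(\<integral>\<^sup>+y. ennreal (indicator (Up tb x) y * f y) \<partial>lborel) = ennreal (LINT y:Up tb x|lborel. f y)"
    unfolding set_lebesgue_integral_def real_scaleR_def
    apply (rule nn_integral_eq_integral)
    using fint_sub[of "Up tb x"] Up_sub_T[OF assms] f_nn
    by (auto simp: set_integrable_def indicator_def)
  also have "(LINT y:Up tb x|lborel. f y) = 1 - F x" using F_tail[OF assms] by linarith
  finally show ?thesis .
qed

lemma int_fF: assumes "A \<in> sets borel" "A \<subseteq> T" "\<And>y. y \<in> A \<Longrightarrow> \<bar>b y\<bar> \<le> 1"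
  "b \<in> borel_measurable (restrict_space borel A)"
  shows "set_integrable lborel A (\<lambda>y. f y * b y)"
proof (rule set_integrable_bound[OF fint_sub[OF assms(1,2)]])
  show "set_borel_measurable lborel A (\<lambda>y. f y * b y)"
    using assms f_bm[OF assms(1,2)] by (simp add: sbm_iff)
  show "AE x in lborel. x \<in> A \<longrightarrow> norm (f x * b x) \<le> norm (f x)"
    using assms f_nn by (auto simp: abs_mult intro!: mult_left_le)
qed

lemma FF_formula: assumes x: "x \<in> T"
  shows "(LINT y:Ico_tb x tb|lborel. F y * f y) = (1 - (F x)\<^sup>2) / 2"
proof -
  define J where "J = Ico_tb x tb"
  have J[measurable]: "J \<in> sets borel" unfolding J_def by simp
  have JT: "J \<subseteq> T" using x Ico_sub_T[of x] by (auto simp: J_def Theta_def)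
  have [measurable]: "(\<lambda>y. indicator J y * f y) \<in> borel_measurable borel" by (rule find_bm[OF J JT])
  define m where "m = 1 - F x"
  have mJ: "(LINT y:J|lborel. f y) = m" unfolding J_def m_def by (rule tail_Ico[OF x])
  define P where "P y z = ennreal (indicator J y * f y * (indicator J z * f z) * (if y < z then 1 else 0))" for y z
  have Pm: "case_prod P \<in> borel_measurable (lborel \<Otimes>\<^sub>M lborel)" unfolding P_def by measurable
  have Pm3a: "(\<lambda>(x, y). P x y) \<in> borel_measurable (borel \<Otimes>\<^sub>M lborel)"
    unfolding P_def by measurable
  have Pm3b: "(\<lambda>(x, y). P y x) \<in> borel_measurable (borel \<Otimes>\<^sub>M lborel)"
    unfolding P_def by measurable
  have Pm2[measurable]: "P y \<in> borel_measurable borel" "(\<lambda>z. P z y) \<in> borel_measurable borel" for y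
    unfolding P_def by measurable
  have int1: "set_integrable lborel J (\<lambda>y. f y * (1 - F y))"
    using JT F_nn F_le1 by (intro int_fF J JT) (auto intro!: borel_measurable_diff F_bm[OF J JT])
  define R where "R = (LINT y:J|lborel. f y * (1 - F y))"
  have S: "(\<integral>\<^sup>+y. \<integral>\<^sup>+z. P y z \<partial>lborel \<partial>lborel) = ennreal R"
  proof -
    have "(\<integral>\<^sup>+z. P y z \<partial>lborel) = ennreal (indicator J y * (f y * (1 - F y)))" for y
    proof (cases "y \<in> J")
      case True
      then have yT: "y \<in> T" using JT by auto
      have "(\<integral>\<^sup>+z. P y z \<partial>lborel) = (\<integral>\<^sup>+z. ennreal (f y) * ennreal (indicator (Up tb y) z * f z) \<partial>lborel)"
      proof (rule nn_integral_cong_AE)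
        show "AE z in lborel. P y z = ennreal (f y) * ennreal (indicator (Up tb y) z * f z)"
          using AE_lborel_singleton[of "real_of_ereal tb"]
        proof eventually_elim
          case (elim z)
          have "indicator J z * (if y < z then 1 else 0) = (indicator (Up tb y) z :: real)"
            using elim True by (auto simp: J_def Ico_tb_def Up_def indicator_def,
               metis order.order_iff_strict real_of_ereal.simps(1))
          then show ?case using True f_nn[OF yT] unfolding P_def
            by (simp add: ennreal_mult'[symmetric] mult_ac)
        qed
      qed
      also have "\<dots> = ennreal (f y) * ennreal (1 - F y)"
        using tail_nn_int[OF yT] Up_sets[of tb y] find_bm[OF Up_sets Up_sub_T[OF yT]]
        by (subst nn_integral_cmult) auto
      finally show ?thesis using True f_nn[OF yT] by (simp add: ennreal_mult')
    qed (simp add: P_def)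
    then have "(\<integral>\<^sup>+y. \<integral>\<^sup>+z. P y z \<partial>lborel \<partial>lborel) = (\<integral>\<^sup>+y. ennreal (indicator J y * (f y * (1 - F y))) \<partial>lborel)"
      by simp
    also have "\<dots> = ennreal R"
      unfolding R_def set_lebesgue_integral_def real_scaleR_def
      apply (rule nn_integral_eq_integral)
      using int1 JT f_nn F_le1 by (auto simp: set_integrable_def indicator_def intro!: AE_I2)
    finally show ?thesis .
  qed
  have S': "(\<integral>\<^sup>+y. \<integral>\<^sup>+z. P z y \<partial>lborel \<partial>lborel) = ennreal R"
    using lborel_pair.Fubini'[OF Pm] S by simp
  have sum: "(\<integral>\<^sup>+y. \<integral>\<^sup>+z. P y z \<partial>lborel \<partial>lborel) + (\<integral>\<^sup>+y. \<integral>\<^sup>+z. P z y \<partial>lborel \<partial>lborel)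
      = ennreal m * ennreal m"
  proof -
    have "(\<integral>\<^sup>+z. P y z \<partial>lborel) + (\<integral>\<^sup>+z. P z y \<partial>lborel) = ennreal (indicator J y * f y) * ennreal m" for y
    proof -
      have "(\<integral>\<^sup>+z. P y z \<partial>lborel) + (\<integral>\<^sup>+z. P z y \<partial>lborel) = (\<integral>\<^sup>+z. P y z + P z y \<partial>lborel)"
        by (rule nn_integral_add[symmetric]) auto
      also have "\<dots> = (\<integral>\<^sup>+z. ennreal (indicator J y * f y) * ennreal (indicator J z * f z) \<partial>lborel)"
      proof (rule nn_integral_cong_AE)
        show "AE z in lborel. P y z + P z y = ennreal (indicator J y * f y) * ennreal (indicator J z * f z)"
          using AE_lborel_singleton[of y]
        proof eventually_elim
          case (elim z)
          have n1: "0 \<le> indicator J y * f y" using JT f_nn by (auto simp: indicator_def)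
          have n2: "0 \<le> indicator J z * f z" using JT f_nn by (auto simp: indicator_def)
          show ?case using elim n1 n2 unfolding P_def
            by (cases "y < z") (auto simp: ennreal_mult'[symmetric] mult_ac)
        qed
      qed
      also have "\<dots> = ennreal (indicator J y * f y) * ennreal m"
      proof -
        have "(\<integral>\<^sup>+z. ennreal (indicator J z * f z) \<partial>lborel) = ennreal m"
          unfolding mJ[symmetric] set_lebesgue_integral_def real_scaleR_def
          apply (rule nn_integral_eq_integral)
          using fint_sub[OF J JT] JT f_nn by (auto simp: set_integrable_def indicator_def)
        then show ?thesis by (subst nn_integral_cmult) auto
      qed
      finally show ?thesis .
    qed
    then have "(\<integral>\<^sup>+y. \<integral>\<^sup>+z. P y z \<partial>lborel \<partial>lborel) + (\<integral>\<^sup>+y. \<integral>\<^sup>+z. P z y \<partial>lborel \<partial>lborel)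
        = (\<integral>\<^sup>+y. ennreal (indicator J y * f y) * ennreal m \<partial>lborel)"
      by (subst nn_integral_add[symmetric])
        (auto intro!: lborel.borel_measurable_nn_integral Pm3a Pm3b)
    also have "\<dots> = ennreal m * ennreal m"
    proof -
      have "(\<integral>\<^sup>+z. ennreal (indicator J z * f z) \<partial>lborel) = ennreal m"
        unfolding mJ[symmetric] set_lebesgue_integral_def real_scaleR_def
        apply (rule nn_integral_eq_integral)
        using fint_sub[OF J JT] JT f_nn by (auto simp: set_integrable_def indicator_def)
      then show ?thesis by (subst nn_integral_multc) auto
    qed
    finally show ?thesis .
  qed
  have m0: "0 \<le> m" using F_le1[OF x] by (simp add: m_def)
  have R0: "0 \<le> R" unfolding R_def using JT f_nn F_le1 by (intro lint_nonneg) auto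
  have e: "ennreal R + ennreal R = ennreal m * ennreal m" using sum unfolding S S' .
  have "ennreal (R + R) = ennreal (m * m)"
    using e m0 R0 by (metis ennreal_plus ennreal_mult)
  then have RR: "R + R = m * m" using m0 R0 by simp
  have "(LINT y:J|lborel. F y * f y) = (LINT y:J|lborel. f y - f y * (1 - F y))"
    by (rule set_lebesgue_integral_cong) (auto simp: algebra_simps)
  also have "\<dots> = m - R"
    unfolding R_def mJ[symmetric] by (rule set_integral_diff(2)[OF fint_sub[OF J JT] int1])
  finally show ?thesis using RR unfolding J_def m_def by (simp add: power2_eq_square algebra_simps)
qed

end



context setting begin

lemma int_oneF: "A \<in> sets borel \<Longrightarrow> A \<subseteq> T \<Longrightarrow> set_integrable lborel A (\<lambda>y. 1 - F y)"
  using oneF_int by (rule set_integrable_subset) auto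

lemma int_oneF_b: assumes "A \<in> sets borel" "A \<subseteq> T" "\<And>y. y \<in> A \<Longrightarrow> \<bar>b y\<bar> \<le> 1"
  "b \<in> borel_measurable (restrict_space borel A)"
  shows "set_integrable lborel A (\<lambda>y. (1 - F y) * b y)"
proof (rule set_integrable_bound[OF int_oneF[OF assms(1,2)]])
  show "set_borel_measurable lborel A (\<lambda>y. (1 - F y) * b y)"
    using assms F_bm[OF assms(1,2)] by (simp add: sbm_iff)
  show "AE x in lborel. x \<in> A \<longrightarrow> norm ((1 - F x) * b x) \<le> norm (1 - F x)"
    using assms F_le1 by (auto simp: abs_mult intro!: mult_left_le)
qed


lemma int_bf: assumes "A \<in> sets borel" "A \<subseteq> T" "\<And>y. y \<in> A \<Longrightarrow> \<bar>b y\<bar> \<le> 1"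
  "b \<in> borel_measurable (restrict_space borel A)"
  shows "set_integrable lborel A (\<lambda>y. b y * f y)"
  using int_fF[OF assms] by (simp add: mult.commute)

lemma V_int: "A \<in> sets borel \<Longrightarrow> A \<subseteq> T \<Longrightarrow> set_integrable lborel A (\<lambda>x. (1 - F x) / f x * v1 x * f x)"
  using v1int by (rule set_integrable_subset) auto

lemma V_nn: "x \<in> T \<Longrightarrow> 0 \<le> (1 - F x) / f x * v1 x * f x"
  using F_le1 f_nn v1nn by simp

lemma W_split: assumes t0: "0 \<le> t0"
  and sm: "s \<in> borel_measurable (restrict_space borel (Ico_tb t0 tb))"
  and sb: "\<And>x. x \<in> Ico_tb t0 tb \<Longrightarrow> \<bar>s x\<bar> \<le> 1"
  shows "W tb F f v v1 t0 s = (LINT x:Ico_tb t0 tb|lborel. (1 - F x) * s x)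
     + (LINT x:Ico_tb t0 tb|lborel. (1 - F x) / f x * v1 x * f x) + (if t0 = 0 then v 0 else 0)"
proof -
  have IT: "Ico_tb t0 tb \<subseteq> T" by (rule Ico_sub_T[OF t0])
  have "(LINT x:Ico_tb t0 tb|lborel. (1 - F x) / f x * (s x + v1 x) * f x)
      = (LINT x:Ico_tb t0 tb|lborel. (1 - F x) * s x + (1 - F x) / f x * v1 x * f x)"
  proof (rule set_lebesgue_integral_cong)
    show "\<forall>x. x \<in> Ico_tb t0 tb \<longrightarrow> (1 - F x) / f x * (s x + v1 x) * f x =
      (1 - F x) * s x + (1 - F x) / f x * v1 x * f x"
    proof (intro allI impI)
      fix x assume "x \<in> Ico_tb t0 tb"
      then have "f x \<noteq> 0" using IT fpos by (metis less_irrefl subsetD)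
      then show "(1 - F x) / f x * (s x + v1 x) * f x = (1 - F x) * s x + (1 - F x) / f x * v1 x * f x"
        by (simp add: field_simps)
    qed
  qed simp
  also have "\<dots> = (LINT x:Ico_tb t0 tb|lborel. (1 - F x) * s x)
     + (LINT x:Ico_tb t0 tb|lborel. (1 - F x) / f x * v1 x * f x)"
    by (rule set_integral_add(2)[OF int_oneF_b[OF Ico_sets IT sb sm] V_int[OF Ico_sets IT]])
  finally show ?thesis unfolding W_def intdF_def by simp
qed

lemma F0: "F 0 = 0"
proof -
  have "(LINT y:{0..0}|lborel. f y) = (LINT y:{}|lborel. f y)"
    by (rule lint_finite_diff[where X="{0}"]) auto
  then show ?thesis using Fdef[OF zero_T] by (simp add: set_lebesgue_integral_def)
qed

lemma Ico_T: "x \<in> Ico_tb t0 tb \<Longrightarrow> 0 \<le> t0 \<Longrightarrow> x \<in> T"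
  using Ico_sub_T by blast

lemma half_in_S: "(\<lambda>_. 1/2) \<in> Sset tb F f 0"
proof -
  have IT: "Ico_tb 0 tb \<subseteq> T" by (rule Ico_sub_T) simp
  have bF: "bounded (F ` Ico_tb 0 tb)"
    using IT F_nn F_le1 by (intro boundedI[where B=1]) auto
  have tails: "intdF f (Ico_tb x tb) (\<lambda>_. 1/2) = (1 - F x) / 2" if "x \<in> T" for x
    using tail_Ico[OF that] by (simp add: intdF_def)
  have tailsF: "intdF f (Ico_tb x tb) F = (1 - (F x)\<^sup>2) / 2" if "x \<in> T" for x
    using FF_formula[OF that] by (simp add: intdF_def)
  show ?thesis unfolding Sset_def MPS_def
  proof (intro CollectI conjI ballI)
    show "mono_on (Ico_tb 0 tb) (\<lambda>_. 1 / 2 :: real)" by (simp add: monotone_on_def)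
    show "set_borel_measurable lborel (Ico_tb 0 tb) F" using F_meas IT by simp
    show "set_borel_measurable lborel (Ico_tb 0 tb) (\<lambda>_. 1/2 :: real)"
      by (simp add: set_borel_measurable_def)
    fix x assume x: "x \<in> Ico_tb 0 tb"
    then have xT: "x \<in> T" using IT by auto
    show "intdF f (Ico_tb x tb) (\<lambda>_. 1 / 2) \<le> intdF f (Ico_tb x tb) F"
      unfolding tails[OF xT] tailsF[OF xT] using F_nn[OF xT] F_le1[OF xT]
      by (simp add: power2_eq_square divide_right_mono mult_left_le_one_le)
  next
    show "intdF f (Ico_tb 0 tb) (\<lambda>_. 1 / 2) = intdF f (Ico_tb 0 tb) F"
      using tails[OF zero_T] tailsF[OF zero_T] F0 by simp
  qed (use bF in \<open>auto intro: boundedI[where B=1]\<close>)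
qed

end



context setting begin

lemma IFR_ineq: assumes ifr: "IFR tb F f" and t0: "0 \<le> t0" "ereal t0 < tb" and s: "s \<in> Sset tb F f t0"
  shows "W tb F f v v1 t0 s \<le> W tb F f v v1 0 (\<lambda>_. 1/2)"
proof -
  define I where "I = Ico_tb t0 tb"
  define I0 where "I0 = Ico_tb 0 tb"
  have t0T: "t0 \<in> T" using t0 by (auto simp: Theta_def less_imp_le)
  have IT: "I \<subseteq> T" unfolding I_def by (rule Ico_sub_T[OF t0(1)])
  have I0T: "I0 \<subseteq> T" unfolding I0_def by (rule Ico_sub_T) simp
  have Im[measurable]: "I \<in> sets borel" "I0 \<in> sets borel" by (simp_all add: I_def I0_def)
  have smono: "mono_on I s" and sb: "\<And>x. x \<in> I \<Longrightarrow> 0 \<le> s x \<and> s x \<le> 1"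
    and sm: "set_borel_measurable lborel I s" and seq: "intdF f I s = intdF f I F"
    using s unfolding Sset_def MPS_def I_def by auto
  have sm': "s \<in> borel_measurable (restrict_space borel I)" using sm by (simp add: sbm_iff)
  have sabs: "\<And>x. x \<in> I \<Longrightarrow> \<bar>s x\<bar> \<le> 1" using sb by fastforce
  define a where "a = F t0"
  have a0: "0 \<le> a" and a1: "a \<le> 1" using F_nn[OF t0T] F_le1[OF t0T] by (simp_all add: a_def)
  define c where "c = (1 + a) / 2"
  define g where "g x = (1 - F x) / f x" for x
  have g_anti: "\<And>x y. x \<in> T \<Longrightarrow> y \<in> T \<Longrightarrow> x \<le> y \<Longrightarrow> g y \<le> g x"
    using ifr unfolding IFR_def g_def monotone_on_def by auto
  have g_nn: "\<And>x. x \<in> T \<Longrightarrow> 0 \<le> g x" using F_le1 f_nn by (simp add: g_def)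
  have gf: "\<And>x. x \<in> T \<Longrightarrow> 1 - F x = g x * f x"
    using fpos unfolding g_def by (metis less_irrefl nonzero_divide_eq_eq)
  define L where "L = {x\<in>I. s x < c}"
  define K where "K = (if L = {} then g t0 else Inf (g ` L))"
  have piv: "g x * (s x - c) \<le> K * (s x - c)" if x: "x \<in> I" for x
  proof -
    have xT: "x \<in> T" using IT x by auto
    show ?thesis
    proof (cases "s x < c")
      case True
      then have xL: "x \<in> L" using x by (simp add: L_def)
      have bdd: "bdd_below (g ` L)" using IT g_nn by (intro bdd_belowI[where m=0]) (auto simp: L_def)
      have "K \<le> g x" using xL bdd by (auto simp: K_def intro!: cInf_lower)
      then show ?thesis using True by (intro mult_right_mono_neg) auto
    next
      case False
      have "g x \<le> K"
      proof (cases "L = {}")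
        case True then show ?thesis using g_anti[OF t0T xT] x by (simp add: K_def I_def Ico_tb_def)
      next
        case ne: False
        have "g x \<le> Inf (g ` L)"
        proof (rule cInf_greatest)
          show "g ` L \<noteq> {}" using ne by simp
          fix z assume "z \<in> g ` L"
          then obtain y where y: "y \<in> L" "z = g y" by auto
          have "y < x"
          proof (rule ccontr)
            assume "\<not> y < x" then have "x \<le> y" by simp
            then have "s x \<le> s y" using smono x y(1) unfolding L_def by (auto simp: monotone_on_def)
            then show False using y(1) False unfolding L_def by auto
          qed
          then show "g x \<le> z" using y IT x g_anti[of y x] by (auto simp: L_def)
        qed
        then show ?thesis using ne by (simp add: K_def)
      qed
      then show ?thesis using False by (intro mult_right_mono) auto
    qed
  qed
  have pw: "(1 - F x) * s x \<le> c * (1 - F x) + K * (s x * f x - c * f x)" if x: "x \<in> I" for x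
  proof -
    have xT: "x \<in> T" using IT x by auto
    have "f x * (g x * (s x - c)) \<le> f x * (K * (s x - c))" by (rule mult_left_mono[OF piv[OF x] f_nn[OF xT]])
    moreover have "(1 - F x) * s x - c * (1 - F x) = f x * (g x * (s x - c))"
      unfolding gf[OF xT] by (simp add: algebra_simps)
    moreover have "K * (s x * f x - c * f x) = f x * (K * (s x - c))" by (simp add: algebra_simps)
    ultimately show ?thesis by linarith
  qed
  have i1: "set_integrable lborel I (\<lambda>x. (1 - F x) * s x)" by (rule int_oneF_b[OF Im(1) IT sabs sm'])
  have i2: "set_integrable lborel I (\<lambda>x. 1 - F x)" by (rule int_oneF[OF Im(1) IT])
  have i3: "set_integrable lborel I (\<lambda>x. s x * f x)" by (rule int_bf[OF Im(1) IT sabs sm'])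
  have i4: "set_integrable lborel I f" by (rule fint_sub[OF Im(1) IT])
  have i2c: "set_integrable lborel I (\<lambda>x. c * (1 - F x))" using i2 by auto
  have i4c: "set_integrable lborel I (\<lambda>x. c * f x)" using i4 by auto
  have i34: "set_integrable lborel I (\<lambda>x. s x * f x - c * f x)" by (rule set_integral_diff(1)[OF i3 i4c])
  have i34K: "set_integrable lborel I (\<lambda>x. K * (s x * f x - c * f x))" using i34 by auto
  define X where "X = (LINT x:I|lborel. 1 - F x)"
  have sf: "(LINT x:I|lborel. s x * f x) = (1 - a\<^sup>2) / 2"
    using seq FF_formula[OF t0T] unfolding intdF_def I_def a_def by simp
  have ff: "(LINT x:I|lborel. f x) = 1 - a" using tail_Ico[OF t0T] by (simp add: I_def a_def)
  have A1: "(LINT x:I|lborel. (1 - F x) * s x) \<le> c * X"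
  proof -
    have "(LINT x:I|lborel. (1 - F x) * s x) \<le> (LINT x:I|lborel. c * (1 - F x) + K * (s x * f x - c * f x))"
      by (rule set_integral_mono[OF i1 set_integral_add(1)[OF i2c i34K] pw])
    also have "\<dots> = c * X + K * ((LINT x:I|lborel. s x * f x) - c * (LINT x:I|lborel. f x))"
      using set_integral_diff(2)[OF i3 i4c] unfolding set_integral_add(2)[OF i2c i34K] X_def by simp
    also have "\<dots> = c * X" unfolding sf ff c_def by (simp add: power2_eq_square algebra_simps)
    finally show ?thesis .
  qed
  have XB: "X \<le> g t0 * (1 - a)"
  proof -
    have "X \<le> (LINT x:I|lborel. g t0 * f x)"
      unfolding X_def
    proof (rule set_integral_mono[OF i2])
      show "set_integrable lborel I (\<lambda>x. g t0 * f x)" using i4 by auto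
      fix x assume x: "x \<in> I"
      then have xT: "x \<in> T" using IT by auto
      have "g x \<le> g t0" using g_anti[OF t0T xT] x by (simp add: I_def Ico_tb_def)
      then show "1 - F x \<le> g t0 * f x" using gf[OF xT] f_nn[OF xT] by (simp add: mult_right_mono)
    qed
    then show ?thesis using ff by simp
  qed
  define J where "J = {0..<t0}"
  have JT: "J \<subseteq> T" using t0T by (auto simp: J_def Theta_def) (meson ereal_less_eq(3) less_imp_le order_trans)
  define Y where "Y = (LINT x:J|lborel. 1 - F x)"
  have YB: "g t0 * a \<le> Y"
  proof -
    have "(LINT x:J|lborel. g t0 * f x) \<le> Y"
      unfolding Y_def
    proof (rule set_integral_mono)
      show "set_integrable lborel J (\<lambda>x. g t0 * f x)" using fint_sub[of J] JT by (auto simp: J_def)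
      show "set_integrable lborel J (\<lambda>x. 1 - F x)" using int_oneF[of J] JT by (auto simp: J_def)
      fix x assume x: "x \<in> J"
      then have xT: "x \<in> T" using JT by auto
      have "g t0 \<le> g x" using g_anti[OF xT t0T] x by (simp add: J_def)
      then show "g t0 * f x \<le> 1 - F x" using gf[OF xT] f_nn[OF xT] by (simp add: mult_right_mono)
    qed
    then show ?thesis using F_Ico0[OF t0T] by (simp add: J_def a_def)
  qed
  have XY: "(LINT x:I0|lborel. 1 - F x) = Y + X"
  proof -
    have eq: "I0 = J \<union> I" using t0 by (auto simp: I0_def I_def J_def Ico_tb_def, metis less_ereal.simps(1) order.strict_trans)
    have dj: "J \<inter> I = {}" by (auto simp: J_def I_def Ico_tb_def)
    have Jm: "J \<in> sets borel" by (simp add: J_def)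
    show ?thesis unfolding X_def Y_def eq
      using set_integral_Un[OF dj int_oneF[OF Jm JT] int_oneF[OF Im(1) IT]] by simp
  qed
  have g0: "0 \<le> g t0" by (rule g_nn[OF t0T])
  have "a * X \<le> a * (g t0 * (1 - a))" using XB a0 by (rule mult_left_mono)
  also have "\<dots> \<le> g t0 * a" using g0 a0 a1 by (simp add: algebra_simps mult_left_le)
  finally have aXY: "a * X \<le> Y" using YB by linarith
  have main: "(LINT x:I|lborel. (1 - F x) * s x) \<le> (LINT x:I0|lborel. (1 - F x) * (1/2))"
    using A1 aXY XY unfolding c_def by (simp add: field_simps)
  have Vm: "(LINT x:I|lborel. (1 - F x) / f x * v1 x * f x) \<le> (LINT x:I0|lborel. (1 - F x) / f x * v1 x * f x)"
    apply (rule lint_mono_set[OF V_int[OF Im(2) I0T] Im(1) Im(2)])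
    subgoal using t0 by (auto simp: I_def I0_def Ico_tb_def)
    subgoal for x using I0T V_nn by blast
    done
  have vm: "(if t0 = 0 then v 0 else 0) \<le> v 0" using vnn[OF zero_T] by simp
  have half_m: "(\<lambda>_. 1/2 :: real) \<in> borel_measurable (restrict_space borel I0)" by simp
  have w1: "W tb F f v v1 t0 s = (LINT x:I|lborel. (1 - F x) * s x)
     + (LINT x:I|lborel. (1 - F x) / f x * v1 x * f x) + (if t0 = 0 then v 0 else 0)"
    unfolding I_def by (rule W_split[OF t0(1) sm'[unfolded I_def] sabs[unfolded I_def]])
  have w2: "W tb F f v v1 0 (\<lambda>_. 1/2) = (LINT x:I0|lborel. (1 - F x) * (1/2))
     + (LINT x:I0|lborel. (1 - F x) / f x * v1 x * f x) + (if (0::real) = 0 then v 0 else 0)"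
    unfolding I0_def by (rule W_split[of 0 "\<lambda>_. 1/2", OF order_refl half_m[unfolded I0_def]]) simp
  have "(if (0::real) = 0 then v 0 else 0) = v 0" by simp
  then show ?thesis using w1 w2 main Vm vm by linarith
qed

end



lemma cnt_sum: fixes y :: real assumes "0 \<le> y"
  shows "(\<Sum>k\<in>{1..m}. if real k \<le> y then 1 else 0 :: real) = min (real m) (of_int \<lfloor>y\<rfloor>)"
proof (induction m)
  case 0 then show ?case using assms by simp
next
  case (Suc m)
  have "(\<Sum>k\<in>{1..Suc m}. if real k \<le> y then 1 else 0 :: real) = 
      (\<Sum>k\<in>{1..m}. if real k \<le> y then 1 else 0 :: real) + (if real (Suc m) \<le> y then 1 else 0)"
    by simp
  also have "\<dots> = min (real (Suc m)) (of_int \<lfloor>y\<rfloor>)"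
  proof (cases "real (Suc m) \<le> y")
    case True
    then have "int (Suc m) \<le> \<lfloor>y\<rfloor>" using le_floor_iff[of "int (Suc m)" y] by simp
    then have "real (Suc m) \<le> of_int \<lfloor>y\<rfloor>" by (metis of_int_le_iff of_int_of_nat_eq)
    then show ?thesis using True Suc by simp
  next
    case False
    then have "\<lfloor>y\<rfloor> < int (Suc m)" using floor_less_iff[of y "int (Suc m)"] by simp
    then have "\<lfloor>y\<rfloor> \<le> int m" by simp
    then have "of_int \<lfloor>y\<rfloor> \<le> real m" by (metis of_int_le_iff of_int_of_nat_eq)
    then show ?thesis using False Suc by simp
  qed
  finally show ?case .
qed

lemma approx_lim: fixes G :: real and u :: "nat \<Rightarrow> real"
  assumes G: "0 \<le> G"
  and u: "\<And>n. n \<ge> 1 \<Longrightarrow> u n = min (real (n*n)) (of_int \<lfloor>real n * G\<rfloor>) / real n"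
  shows "u \<longlonglongrightarrow> G" "\<And>n. n \<ge> 1 \<Longrightarrow> 0 \<le> u n \<and> u n \<le> G"
proof -
  show b: "0 \<le> u n \<and> u n \<le> G" if n: "n \<ge> 1" for n
  proof -
    have f1: "(of_int \<lfloor>real n * G\<rfloor> :: real) \<le> real n * G" by simp
    have "0 \<le> real n * G" using G by simp
    then have f2: "0 \<le> (of_int \<lfloor>real n * G\<rfloor> :: real)" by simp
    have m1: "0 \<le> min (real (n*n)) (of_int \<lfloor>real n * G\<rfloor>)" using f2 by simp
    have m2: "min (real (n*n)) (of_int \<lfloor>real n * G\<rfloor>) \<le> real n * G"
      by (rule order_trans[OF min.cobounded2 f1])
    note m1 m2
    then show ?thesis using n u[OF n] by (auto simp: divide_le_eq mult.commute)
  qed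
  show "u \<longlonglongrightarrow> G"
  proof (rule tendsto_sandwich[of "\<lambda>n. G - 1 / real n" _ _ "\<lambda>n. G"])
    show "\<forall>\<^sub>F n in sequentially. u n \<le> G" using b by (auto simp: eventually_sequentially)
    show "(\<lambda>n. G) \<longlonglongrightarrow> G" by simp
    show "(\<lambda>n. G - 1 / real n) \<longlonglongrightarrow> G"
      using tendsto_diff[OF tendsto_const[of G] lim_inverse_n'] by simp
    show "\<forall>\<^sub>F n in sequentially. G - 1 / real n \<le> u n"
      unfolding eventually_sequentially
    proof (intro exI[of _ "nat \<lceil>G\<rceil> + 1"] allI impI)
      fix n assume n: "nat \<lceil>G\<rceil> + 1 \<le> n"
      then have n1: "n \<ge> 1" by simp
      have "G \<le> real n" using n by linarith
      then have "real n * G \<le> real (n * n)" using G by (simp add: mult_left_mono)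
      then have "(of_int \<lfloor>real n * G\<rfloor> :: real) \<le> real (n*n)" by (meson order_trans of_int_floor_le)
      then have un: "u n = of_int \<lfloor>real n * G\<rfloor> / real n" using u[OF n1] by simp
      have "real n * G - 1 \<le> of_int \<lfloor>real n * G\<rfloor>" by linarith
      then have "(real n * G - 1) / real n \<le> of_int \<lfloor>real n * G\<rfloor> / real n"
        using n1 by (intro divide_right_mono) auto
      then show "G - 1 / real n \<le> u n" using n1 un by (simp add: diff_divide_distrib)
    qed
  qed
qed




context setting begin

lemma DFR_key: assumes dfr: "DFR tb F f" and t0: "0 \<le> t0" "ereal t0 < tb" and s: "s \<in> Sset tb F f t0"
  shows "0 \<le> (LINT x:Ico_tb t0 tb|lborel. (1 - F x) * (F x - s x))"
proof -
  define I where "I = Ico_tb t0 tb"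
  have IT: "I \<subseteq> T" unfolding I_def by (rule Ico_sub_T[OF t0(1)])
  have Im[measurable]: "I \<in> sets borel" by (simp add: I_def)
  have sb: "\<And>x. x \<in> I \<Longrightarrow> 0 \<le> s x \<and> s x \<le> 1"
    and sm: "set_borel_measurable lborel I s"
    and mt: "\<And>z. z \<in> I \<Longrightarrow> intdF f (Ico_tb z tb) s \<le> intdF f (Ico_tb z tb) F"
    using s unfolding Sset_def MPS_def I_def by auto
  have sm': "s \<in> borel_measurable (restrict_space borel I)" using sm by (simp add: sbm_iff)
  have sabs: "\<And>x. x \<in> I \<Longrightarrow> \<bar>s x\<bar> \<le> 1" using sb by fastforce
  define g where "g x = (1 - F x) / f x" for x
  have g_mono: "\<And>x y. x \<in> T \<Longrightarrow> y \<in> T \<Longrightarrow> x \<le> y \<Longrightarrow> g x \<le> g y"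
    using dfr unfolding DFR_def g_def monotone_on_def by auto
  have g_nn: "\<And>x. x \<in> T \<Longrightarrow> 0 \<le> g x" using F_le1 f_nn by (simp add: g_def)
  have gf: "\<And>x. x \<in> T \<Longrightarrow> 1 - F x = g x * f x"
    using fpos unfolding g_def by (metis less_irrefl nonzero_divide_eq_eq)
  define h where "h x = (F x - s x) * f x" for x
  have tailh: "set_integrable lborel (Ico_tb z tb) h \<and> 0 \<le> (LINT x:Ico_tb z tb|lborel. h x)" if z: "z \<in> I" for z
  proof -
    define Z where "Z = Ico_tb z tb"
    have ZI: "Z \<subseteq> I" using z by (auto simp: Z_def I_def Ico_tb_def)
    have ZT: "Z \<subseteq> T" using ZI IT by auto
    have Zm: "Z \<in> sets borel" by (simp add: Z_def)
    have smZ: "s \<in> borel_measurable (restrict_space borel Z)"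
      using set_borel_measurable_subset[OF sm _ ZI] Zm by (simp add: sbm_iff)
    have iS: "set_integrable lborel Z (\<lambda>x. s x * f x)"
      by (rule int_bf[OF Zm ZT _ smZ]) (use sabs ZI in auto)
    have iF: "set_integrable lborel Z (\<lambda>x. F x * f x)"
      by (rule int_bf[OF Zm ZT _ F_bm[OF Zm ZT]]) (use F_nn F_le1 ZT in force)
    have hZ: "h = (\<lambda>x. F x * f x - s x * f x)" by (auto simp: h_def algebra_simps)
    show ?thesis unfolding hZ Z_def[symmetric]
      using set_integral_diff[OF iF iS] mt[OF z] by (auto simp: intdF_def Z_def)
  qed
  define S where "S c = {x\<in>I. c \<le> g x}" for c
  have SI: "S c \<subseteq> I" for c by (auto simp: S_def)
  have Sint: "set_integrable lborel (S c) h \<and> 0 \<le> (LINT x:S c|lborel. h x)" for c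
  proof (cases "S c = {}")
    case True then show ?thesis by (simp add: set_lebesgue_integral_def)
  next
    case ne: False
    define z where "z = Inf (S c)"
    have bdd: "bdd_below (S c)" by (intro bdd_belowI[where m=t0]) (auto simp: S_def I_def Ico_tb_def)
    have tz: "t0 \<le> z" unfolding z_def using ne by (intro cInf_greatest) (auto simp: S_def I_def Ico_tb_def)
    obtain y where y: "y \<in> S c" using ne by auto
    have zy: "z \<le> y" unfolding z_def using y bdd by (rule cInf_lower)
    have "ereal y < tb" using y by (auto simp: S_def I_def Ico_tb_def)
    then have zb: "ereal z < tb" using zy by (meson ereal_less_eq(3) order_le_less_trans)
    have zI: "z \<in> I" using tz zb by (simp add: I_def Ico_tb_def)
    have sub1: "S c \<subseteq> Ico_tb z tb"
    proof
      fix x assume x: "x \<in> S c"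
      have "z \<le> x" unfolding z_def using x bdd by (rule cInf_lower)
      then show "x \<in> Ico_tb z tb" using x by (auto simp: S_def I_def Ico_tb_def)
    qed
    have sub2: "Ico_tb z tb - S c \<subseteq> {z}"
    proof
      fix x assume x: "x \<in> Ico_tb z tb - S c"
      show "x \<in> {z}"
      proof (rule ccontr)
        assume "x \<notin> {z}"
        then have zx: "z < x" using x by (auto simp: Ico_tb_def)
        then obtain w where w: "w \<in> S c" "w < x" using cInf_less_iff[OF ne bdd] unfolding z_def by auto
        have xI: "x \<in> I" using x tz by (auto simp: I_def Ico_tb_def)
        have "g w \<le> g x" using w xI IT g_mono[of w x] by (auto simp: S_def)
        then have "x \<in> S c" using w xI by (auto simp: S_def)
        then show False using x by simp
      qed
    qed
    have d: "(S c - Ico_tb z tb) \<union> (Ico_tb z tb - S c) \<subseteq> {z}" using sub1 sub2 by auto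
    show ?thesis using tailh[OF zI] lint_finite_diff[OF _ d, of h] sint_finite_diff[OF _ d, of h] by simp
  qed
  define u where "u n x = (\<Sum>k\<in>{1..n*n}. indicator (S (real k / real n)) x) / real n" for n :: nat and x
  have u_form: "u n x = min (real (n*n)) (of_int \<lfloor>real n * g x\<rfloor>) / real n" if x: "x \<in> I" and n: "n \<ge> 1" for x n
  proof -
    have xT: "x \<in> T" using x IT by auto
    have "indicator (S (real k / real n)) x = (if real k \<le> real n * g x then 1 else 0 :: real)" for k
      using x n by (simp add: S_def indicator_def divide_le_eq mult.commute)
    then have "(\<Sum>k\<in>{1..n*n}. indicator (S (real k / real n)) x) = (\<Sum>k\<in>{1..n*n}. if real k \<le> real n * g x then 1 else 0 :: real)"
      by simp
    also have "\<dots> = min (real (n*n)) (of_int \<lfloor>real n * g x\<rfloor>)"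
      by (rule cnt_sum) (use g_nn[OF xT] in simp)
    finally show ?thesis by (simp add: u_def)
  qed
  have u_lim: "(\<lambda>n. u n x) \<longlonglongrightarrow> g x" and u_bd: "\<And>n. n \<ge> 1 \<Longrightarrow> 0 \<le> u n x \<and> u n x \<le> g x" if x: "x \<in> I" for x
    using approx_lim[of "g x" "\<lambda>n. u n x"] g_nn u_form[OF x] x IT by auto
  define \<phi> where "\<phi> n x = indicator I x * (u n x * h x)" for n x
  have \<phi>_eq: "\<phi> n = (\<lambda>x. (\<Sum>k\<in>{1..n*n}. indicator (S (real k / real n)) x * h x) / real n)" for n
  proof
    fix x show "\<phi> n x = (\<Sum>k\<in>{1..n*n}. indicator (S (real k / real n)) x * h x) / real n"
    proof (cases "x \<in> I")
      case True then show ?thesis by (simp add: \<phi>_def u_def sum_distrib_right)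
    next
      case False
      then have "indicator (S c) x = (0::real)" for c using SI by (auto simp: indicator_def)
      then show ?thesis using False by (simp add: \<phi>_def)
    qed
  qed
  have Sint': "integrable lborel (\<lambda>x. indicator (S c) x * h x)" for c
    using Sint[of c] by (simp add: set_integrable_def)
  have \<phi>_int: "integrable lborel (\<phi> n)" for n
  proof -
    have "integrable lborel (\<lambda>x. (\<Sum>k\<in>{1..n*n}. indicator (S (real k / real n)) x * h x))"
      by (rule Bochner_Integration.integrable_sum) (rule Sint')
    then show ?thesis unfolding \<phi>_eq by (rule integrable_divide_zero)
  qed
  have \<phi>_nn: "0 \<le> integral\<^sup>L lborel (\<phi> n)" for n
  proof -
    have "integral\<^sup>L lborel (\<phi> n) = (\<Sum>k\<in>{1..n*n}. (LINT x:S (real k / real n)|lborel. h x)) / real n"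
      unfolding \<phi>_eq integral_divide_zero
      by (subst Bochner_Integration.integral_sum) (auto simp: Sint' set_lebesgue_integral_def)
    also have "0 \<le> \<dots>" using Sint by (intro divide_nonneg_nonneg sum_nonneg) auto
    finally show ?thesis .
  qed
  define Lf where "Lf x = indicator I x * ((1 - F x) * (F x - s x))" for x
  define w where "w x = indicator I x * ((1 - F x) * \<bar>F x - s x\<bar>)" for x
  have bm1: "(\<lambda>x. F x - s x) \<in> borel_measurable (restrict_space borel I)" using F_bm[OF Im IT] sm' by simp
  have bm2: "(\<lambda>x. \<bar>F x - s x\<bar>) \<in> borel_measurable (restrict_space borel I)" using bm1 by simp
  have Fsb: "\<And>x. x \<in> I \<Longrightarrow> \<bar>F x - s x\<bar> \<le> 1" using F_nn F_le1 sb IT by force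
  have Lf_int: "integrable lborel Lf"
    using int_oneF_b[OF Im IT Fsb bm1] by (simp add: set_integrable_def Lf_def[abs_def])
  have w_int: "integrable lborel w"
    using int_oneF_b[OF Im IT _ bm2] Fsb by (simp add: set_integrable_def w_def[abs_def])
  have conv: "(\<lambda>n. \<phi> n x) \<longlonglongrightarrow> Lf x" for x
  proof (cases "x \<in> I")
    case True
    then have xT: "x \<in> T" using IT by auto
    have "(\<lambda>n. u n x * h x) \<longlonglongrightarrow> g x * h x" by (rule tendsto_mult[OF u_lim[OF True] tendsto_const])
    moreover have "g x * h x = (1 - F x) * (F x - s x)" using gf[OF xT] by (simp add: h_def)
    ultimately show ?thesis using True by (simp add: \<phi>_def Lf_def)
  qed (simp add: \<phi>_def Lf_def)
  have bound: "norm (\<phi> n x) \<le> w x" for n x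
  proof (cases "x \<in> I \<and> n \<ge> 1")
    case True
    then have xT: "x \<in> T" using IT by auto
    have "\<bar>u n x * h x\<bar> = u n x * (\<bar>F x - s x\<bar> * f x)"
      using u_bd[of x n] True f_nn[OF xT] by (simp add: h_def abs_mult)
    also have "\<dots> \<le> g x * (\<bar>F x - s x\<bar> * f x)"
      using u_bd[of x n] True f_nn[OF xT] by (intro mult_right_mono) auto
    also have "\<dots> = (1 - F x) * \<bar>F x - s x\<bar>" using gf[OF xT] by simp
    finally show ?thesis using True by (simp add: \<phi>_def w_def)
  next
    case False
    have "0 \<le> w x" using F_le1 IT by (auto simp: w_def indicator_def)
    moreover have "\<phi> n x = 0" using False by (auto simp: \<phi>_def u_def)
    ultimately show ?thesis by simp
  qed
  have lim: "(\<lambda>n. integral\<^sup>L lborel (\<phi> n)) \<longlonglongrightarrow> integral\<^sup>L lborel Lf"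
    by (rule integral_dominated_convergence[OF borel_measurable_integrable[OF Lf_int]
          borel_measurable_integrable[OF \<phi>_int] w_int]) (use bound[simplified] in \<open>auto simp: conv\<close>)
  have "0 \<le> integral\<^sup>L lborel Lf" by (rule LIMSEQ_le_const[OF lim]) (use \<phi>_nn in auto)
  then show ?thesis by (simp add: Lf_def[abs_def] set_lebesgue_integral_def I_def)
qed

end



context setting begin

lemma F_in_S: "F \<in> Sset tb F f 0"
proof -
  have IT: "Ico_tb 0 tb \<subseteq> T" by (rule Ico_sub_T) simp
  have bF: "bounded (F ` Ico_tb 0 tb)"
    using IT F_nn F_le1 by (intro boundedI[where B=1]) auto
  show ?thesis unfolding Sset_def MPS_def
    using bF IT F_meas[of "Ico_tb 0 tb"] F_nn F_le1 mono_on_subset[OF F_mono IT] by auto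
qed

lemma DFR_ineq: assumes dfr: "DFR tb F f" and t0: "0 \<le> t0" "ereal t0 < tb" and s: "s \<in> Sset tb F f t0"
  shows "W tb F f v v1 t0 s \<le> W tb F f v v1 0 F"
proof -
  define I where "I = Ico_tb t0 tb"
  define I0 where "I0 = Ico_tb 0 tb"
  have IT: "I \<subseteq> T" unfolding I_def by (rule Ico_sub_T[OF t0(1)])
  have I0T: "I0 \<subseteq> T" unfolding I0_def by (rule Ico_sub_T) simp
  have Im[measurable]: "I \<in> sets borel" "I0 \<in> sets borel" by (simp_all add: I_def I0_def)
  have sb: "\<And>x. x \<in> I \<Longrightarrow> 0 \<le> s x \<and> s x \<le> 1"
    and sm: "set_borel_measurable lborel I s"
    using s unfolding Sset_def MPS_def I_def by auto
  have sm': "s \<in> borel_measurable (restrict_space borel I)" using sm by (simp add: sbm_iff)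
  have sabs: "\<And>x. x \<in> I \<Longrightarrow> \<bar>s x\<bar> \<le> 1" using sb by fastforce
  have Fabs: "\<And>x. x \<in> T \<Longrightarrow> \<bar>F x\<bar> \<le> 1" using F_nn F_le1 by fastforce
  have i1: "set_integrable lborel I (\<lambda>x. (1 - F x) * s x)" by (rule int_oneF_b[OF Im(1) IT sabs sm'])
  have i2: "set_integrable lborel I (\<lambda>x. (1 - F x) * F x)"
    by (rule int_oneF_b[OF Im(1) IT _ F_bm[OF Im(1) IT]]) (use Fabs IT in auto)
  have i3: "set_integrable lborel I0 (\<lambda>x. (1 - F x) * F x)"
    by (rule int_oneF_b[OF Im(2) I0T _ F_bm[OF Im(2) I0T]]) (use Fabs I0T in auto)
  have key: "0 \<le> (LINT x:I|lborel. (1 - F x) * (F x - s x))"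
    unfolding I_def by (rule DFR_key[OF dfr t0 s])
  also have "(LINT x:I|lborel. (1 - F x) * (F x - s x)) = (LINT x:I|lborel. (1 - F x) * F x - (1 - F x) * s x)"
    by (rule set_lebesgue_integral_cong) (auto simp: algebra_simps)
  also have "\<dots> = (LINT x:I|lborel. (1 - F x) * F x) - (LINT x:I|lborel. (1 - F x) * s x)"
    by (rule set_integral_diff(2)[OF i2 i1])
  finally have A: "(LINT x:I|lborel. (1 - F x) * s x) \<le> (LINT x:I|lborel. (1 - F x) * F x)" by simp
  have B: "(LINT x:I|lborel. (1 - F x) * F x) \<le> (LINT x:I0|lborel. (1 - F x) * F x)"
    apply (rule lint_mono_set[OF i3 Im(1) Im(2)])
    subgoal using t0 by (auto simp: I_def I0_def Ico_tb_def)
    subgoal for x using I0T F_nn F_le1 by (meson mult_nonneg_nonneg diff_ge_0_iff_ge subsetD)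
    done
  have Vm: "(LINT x:I|lborel. (1 - F x) / f x * v1 x * f x) \<le> (LINT x:I0|lborel. (1 - F x) / f x * v1 x * f x)"
    apply (rule lint_mono_set[OF V_int[OF Im(2) I0T] Im(1) Im(2)])
    subgoal using t0 by (auto simp: I_def I0_def Ico_tb_def)
    subgoal for x using I0T V_nn by blast
    done
  have vm: "(if t0 = 0 then v 0 else 0) \<le> v 0" using vnn[OF zero_T] by simp
  have w1: "W tb F f v v1 t0 s = (LINT x:I|lborel. (1 - F x) * s x)
     + (LINT x:I|lborel. (1 - F x) / f x * v1 x * f x) + (if t0 = 0 then v 0 else 0)"
    unfolding I_def by (rule W_split[OF t0(1) sm'[unfolded I_def] sabs[unfolded I_def]])
  have w2: "W tb F f v v1 0 F = (LINT x:I0|lborel. (1 - F x) * F x)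
     + (LINT x:I0|lborel. (1 - F x) / f x * v1 x * f x) + (if (0::real) = 0 then v 0 else 0)"
    unfolding I0_def
    by (rule W_split[of 0 F, OF order_refl F_bm[OF Im(2) I0T, unfolded I0_def]])
      (use Fabs I0T in \<open>auto simp: I0_def\<close>)
  have "(if (0::real) = 0 then v 0 else 0) = v 0" by simp
  then show ?thesis using w1 w2 A B Vm vm by linarith
qed

end

theorem proposition4:
  fixes tb :: ereal and F f v v1 v2 :: "real \<Rightarrow> real"
  assumes "std_assms tb F f v v1 v2"
  shows "(IFR tb F f \<longrightarrow>
            (\<lambda>_. 1/2) \<in> Sset tb F f 0 \<and>
            (\<forall>t0. 0 \<le> t0 \<and> ereal t0 < tb \<longrightarrow>
               (\<forall>s\<in>Sset tb F f t0. W tb F f v v1 t0 s \<le> W tb F f v v1 0 (\<lambda>_. 1/2))))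
       \<and> (DFR tb F f \<longrightarrow>
            F \<in> Sset tb F f 0 \<and>
            (\<forall>t0. 0 \<le> t0 \<and> ereal t0 < tb \<longrightarrow>
               (\<forall>s\<in>Sset tb F f t0. W tb F f v v1 t0 s \<le> W tb F f v v1 0 F)))"
proof -
  interpret setting tb F f v v1 v2 by (rule setting.intro[OF assms])
  show ?thesis using half_in_S IFR_ineq F_in_S DFR_ineq by blast
qed


end
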